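(* Let $n$ be a power of two, $\Delta=50+1000\log n$, and let $X$ be uniformly random over $\{0,1\}^n$. Then with probability at least $1/2$, every segment $z^X_i$ ($i=1,\dots,\ell_X$) of the marker segmentation of $X$ has length at most $\Delta$.
   Context: Logarithms are base $2$. Marker segmentation of $x\in\{0,1\}^n$: split $x$ into consecutive substrings $z^x_1,\dots,z^x_{\ell_x}$ by cutting immediately after each occurrence of the marker $0011$; every segment except possibly the last ends with $0011$ and contains exactly one occurrence of $0011$, and the last segment is the (possibly marker-free) remainder if nonempty. *)

theory Defs
  imports Complex_Main
begin

text \<open>Bit strings are lists of booleans, True = 1, False = 0.
  The marker is 0011.\<close>

definition marker :: "bool list" where
  "marker = [False, False, True, True]"

definition first_marker :: "bool list \<Rightarrow> nat option" where
  "first_marker xs =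
     (if \<exists>i. i + 4 \<le> length xs \<and> take 4 (drop i xs) = marker
      then Some (LEAST i. i + 4 \<le> length xs \<and> take 4 (drop i xs) = marker)
      else None)"

lemma first_marker_le: "first_marker xs = Some i \<Longrightarrow> i + 4 \<le> length xs"
  unfolding first_marker_def
  by (auto split: if_splits intro: LeastI2_ex)

function marker_segments :: "bool list \<Rightarrow> bool list list" where
  "marker_segments xs =
     (case first_marker xs of
        None \<Rightarrow> (if xs = [] then [] else [xs])
      | Some i \<Rightarrow> take (i + 4) xs # marker_segments (drop (i + 4) xs))"
  by pat_completeness auto
termination
  by (relation "measure length") (auto dest: first_marker_le)

end

theory Submission
  imports Defs
begin

declare marker_segments.simps[simp del]

lemma fin_len: "finite {x :: bool list. length x = a}"
  using finite_lists_length_eq[of "UNIV::bool set" a] by simp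

lemma card_len: "card {x :: bool list. length x = a} = 2 ^ a"
  using card_lists_length_eq[of "UNIV::bool set" a] by simp

lemma card_split:
  "card {x :: bool list. length x = a + b \<and> P (take a x) \<and> Q (drop a x)}
   = card {u. length u = a \<and> P u} * card {v. length v = b \<and> Q v}"
proof -
  let ?A = "{u :: bool list. length u = a \<and> P u}"
  let ?B = "{v :: bool list. length v = b \<and> Q v}"
  have eq: "{x :: bool list. length x = a + b \<and> P (take a x) \<and> Q (drop a x)} = (\<lambda>(u,v). u @ v) ` (?A \<times> ?B)"
  proof (rule set_eqI, rule iffI)
    fix x assume "x \<in> {x :: bool list. length x = a + b \<and> P (take a x) \<and> Q (drop a x)}"
    then show "x \<in> (\<lambda>(u,v). u @ v) ` (?A \<times> ?B)"
      by (intro image_eqI[of _ _ "(take a x, drop a x)"]) auto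
  qed auto
  have inj: "inj_on (\<lambda>(u,v). u @ v) (?A \<times> ?B)"
    by (auto simp: inj_on_def)
  show ?thesis unfolding eq card_image[OF inj] card_cartesian_product ..
qed

definition G :: "nat \<Rightarrow> bool list set" where
  "G m = {w. length w = 4 * m \<and> (\<forall>j<m. take 4 (drop (4 * j) w) \<noteq> marker)}"

lemma G_Suc: "G (Suc m) = {x. length x = 4 + 4 * m \<and> take 4 x \<noteq> marker \<and> drop 4 x \<in> G m}"
proof (rule set_eqI, rule iffI)
  fix x assume x: "x \<in> G (Suc m)"
  have "\<forall>j<m. take 4 (drop (4 * j) (drop 4 x)) \<noteq> marker"
  proof (intro allI impI)
    fix j assume "j < m"
    with x have "take 4 (drop (4 * Suc j) x) \<noteq> marker" unfolding G_def by blast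
    then show "take 4 (drop (4 * j) (drop 4 x)) \<noteq> marker" by (simp add: add.commute)
  qed
  with x show "x \<in> {x. length x = 4 + 4 * m \<and> take 4 x \<noteq> marker \<and> drop 4 x \<in> G m}"
    unfolding G_def by (auto elim!: allE[of _ 0])
next
  fix x assume x: "x \<in> {x. length x = 4 + 4 * m \<and> take 4 x \<noteq> marker \<and> drop 4 x \<in> G m}"
  have "\<forall>j<Suc m. take 4 (drop (4 * j) x) \<noteq> marker"
  proof (intro allI impI)
    fix j assume j: "j < Suc m"
    show "take 4 (drop (4 * j) x) \<noteq> marker"
    proof (cases j)
      case 0 then show ?thesis using x by simp
    next
      case (Suc j')
      with j x have "take 4 (drop (4 * j') (drop 4 x)) \<noteq> marker" unfolding G_def by auto
      then show ?thesis using Suc by (simp add: add.commute)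
    qed
  qed
  with x show "x \<in> G (Suc m)" unfolding G_def by auto
qed

lemma card_G: "card (G m) = 15 ^ m"
proof (induction m)
  case 0
  have "G 0 = {[]}" unfolding G_def by auto
  then show ?case by simp
next
  case (Suc m)
  have "G (Suc m) = {x. length x = 4 + 4 * m \<and> (\<lambda>u. u \<noteq> marker) (take 4 x) \<and> (\<lambda>v. v \<in> G m) (drop 4 x)}"
    by (simp add: G_Suc)
  then have "card (G (Suc m)) = card {u :: bool list. length u = 4 \<and> u \<noteq> marker} * card {v. length v = 4 * m \<and> v \<in> G m}"
    using card_split[of 4 "4*m" "\<lambda>u. u \<noteq> marker" "\<lambda>v. v \<in> G m"] by simp
  also have "{v. length v = 4 * m \<and> v \<in> G m} = G m" unfolding G_def by auto
  also have "{u :: bool list. length u = 4 \<and> u \<noteq> marker} = {u. length u = 4} - {marker}" by auto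
  also have "card ({u :: bool list. length u = 4} - {marker}) = 15"
    using card_len[of 4] fin_len[of 4] by (simp add: marker_def)
  finally show ?case using Suc by simp
qed

lemma card_W:
  assumes "p + 4 * m \<le> n"
  shows "card {x :: bool list. length x = n \<and> take (4 * m) (drop p x) \<in> G m} = 2 ^ (n - 4 * m) * 15 ^ m"
proof -
  have "{x :: bool list. length x = n \<and> take (4 * m) (drop p x) \<in> G m}
     = {x. length x = p + (n - p) \<and> (\<lambda>_. True) (take p x) \<and> (\<lambda>v. take (4 * m) v \<in> G m) (drop p x)}"
    using assms by auto
  then have "card {x :: bool list. length x = n \<and> take (4 * m) (drop p x) \<in> G m}
     = card {u :: bool list. length u = p} * card {v :: bool list. length v = n - p \<and> take (4 * m) v \<in> G m}"
    using card_split[of p "n - p" "\<lambda>_. True" "\<lambda>v. take (4 * m) v \<in> G m"] by simp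
  also have "{v :: bool list. length v = n - p \<and> take (4 * m) v \<in> G m}
     = {v. length v = 4 * m + (n - p - 4 * m) \<and> (\<lambda>u. u \<in> G m) (take (4 * m) v) \<and> (\<lambda>_. True) (drop (4 * m) v)}"
    using assms by auto
  also have "card \<dots> = card {u. length u = 4 * m \<and> u \<in> G m} * card {v :: bool list. length v = n - p - 4 * m}"
    using card_split[of "4 * m" "n - p - 4 * m" "\<lambda>u. u \<in> G m" "\<lambda>_. True"] by simp
  also have "{u. length u = 4 * m \<and> u \<in> G m} = G m" unfolding G_def by auto
  finally have "card {x :: bool list. length x = n \<and> take (4 * m) (drop p x) \<in> G m}
      = 2 ^ p * (15 ^ m * 2 ^ (n - p - 4 * m))" by (simp add: card_len card_G)
  also have "\<dots> = 2 ^ (n - 4 * m) * 15 ^ m"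
  proof -
    have "n - 4 * m = p + (n - p - 4 * m)" using assms by simp
    then show ?thesis by (simp add: power_add)
  qed
  finally show ?thesis .
qed

lemma seg:
  "z \<in> set (marker_segments x) \<Longrightarrow>
    (\<exists>p. take (length z) (drop p x) = z \<and> p + length z \<le> length x) \<and>
    (\<forall>i. i + 4 < length z \<longrightarrow> take 4 (drop i z) \<noteq> marker)"
proof (induction x rule: marker_segments.induct)
  case (1 xs)
  show ?case
  proof (cases "first_marker xs")
    case None
    then have z: "z = xs" using 1(2) by (subst (asm) marker_segments.simps) (auto split: if_splits)
    have "\<not> (\<exists>i. i + 4 \<le> length xs \<and> take 4 (drop i xs) = marker)"
      using None unfolding first_marker_def by (auto split: if_splits)
    then show ?thesis using z by (auto intro!: exI[of _ 0])
  next
    case (Some i)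
    let ?P = "\<lambda>i. i + 4 \<le> length xs \<and> take 4 (drop i xs) = marker"
    have ex: "\<exists>i. ?P i" and ieq: "i = (LEAST i. ?P i)"
      using Some unfolding first_marker_def by (auto split: if_splits)
    have il: "i + 4 \<le> length xs" using first_marker_le[OF Some] .
    from 1(2) Some have "z = take (i + 4) xs \<or> z \<in> set (marker_segments (drop (i + 4) xs))"
      by (subst (asm) marker_segments.simps) auto
    then show ?thesis
    proof
      assume z: "z = take (i + 4) xs"
      have "take 4 (drop j z) \<noteq> marker" if "j + 4 < length z" for j
      proof -
        have ji: "j < i" using that z il by simp
        then have "\<not> ?P j" using ieq not_less_Least by blast
        moreover have "take 4 (drop j z) = take 4 (drop j xs)" using z ji il
          by (simp add: take_drop min_def)
        ultimately show ?thesis using that z il by auto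
      qed
      moreover have "take (length z) (drop 0 xs) = z \<and> 0 + length z \<le> length xs" using z il by (simp add: min_def)
      ultimately show ?thesis by blast
    next
      assume zin: "z \<in> set (marker_segments (drop (i + 4) xs))"
      from "1.IH"[OF Some zin] obtain p where
        p: "take (length z) (drop p (drop (i + 4) xs)) = z" "p + length z \<le> length (drop (i + 4) xs)"
        and nm: "\<forall>i. i + 4 < length z \<longrightarrow> take 4 (drop i z) \<noteq> marker" by blast
      have "take (length z) (drop (i + 4 + p) xs) = z \<and> (i + 4 + p) + length z \<le> length xs"
        using p il by (simp add: add.commute)
      with nm show ?thesis by blast
    qed
  qed
qed

lemma numeric: "(2::real) ^ k * (15/16) ^ (250 * k + 12) \<le> 1/2"
proof -
  have b0: "(2::nat) * 15 ^ 12 \<le> 16 ^ 12" by simp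
  have b: "(15/16::real) ^ 12 \<le> 1/2"
  proof -
    have "real ((2::nat) * 15 ^ 12) \<le> real (16 ^ 12)" using b0 by (rule of_nat_mono)
    then have "2 * (15::real) ^ 12 \<le> 16 ^ 12" by simp
    then show ?thesis by (simp add: field_simps)
  qed
  have "(15/16::real) ^ 250 \<le> (15/16) ^ 12" by (rule power_decreasing) auto
  with b have a: "(15/16::real) ^ 250 \<le> 1/2" by linarith
  have "(2::real) ^ k * ((15/16) ^ 250) ^ k \<le> 2 ^ k * (1/2) ^ k"
    by (intro mult_left_mono power_mono a) auto
  also have "\<dots> = 1" by (simp add: power_one_over)
  finally have c: "(2::real) ^ k * ((15/16) ^ 250) ^ k \<le> 1" .
  have "(2::real) ^ k * (15/16) ^ (250 * k + 12) = (2 ^ k * ((15/16) ^ 250) ^ k) * (15/16) ^ 12"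
    by (simp only: power_add power_mult mult.assoc)
  also have "\<dots> \<le> 1 * (1/2)"
    by (intro mult_mono c b) auto
  finally show ?thesis by simp
qed

theorem lemma6:
  fixes n k :: nat
  assumes "n = 2 ^ k"
  shows "real (card {x :: bool list. length x = n \<and>
            (\<forall>z \<in> set (marker_segments x). real (length z) \<le> 50 + 1000 * log 2 (real n))})
         \<ge> (1/2) * real (card {x :: bool list. length x = n})"
proof -
  define m where "m = 250 * k + 12"
  define D where "D = 50 + 1000 * log 2 (real n)"
  have D: "D = 50 + 1000 * real k" unfolding D_def assms by (simp add: log_nat_power)
  define S where "S = {x :: bool list. length x = n}"
  define B where "B = {x \<in> S. \<not> (\<forall>z \<in> set (marker_segments x). real (length z) \<le> D)}"
  define W where "W p = {x :: bool list. length x = n \<and> p + 4 * m \<le> n \<and> take (4 * m) (drop p x) \<in> G m}" for p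
  have finS: "finite S" unfolding S_def by (rule fin_len)
  have BS: "B \<subseteq> S" unfolding B_def by auto
  have good: "{x :: bool list. length x = n \<and> (\<forall>z \<in> set (marker_segments x). real (length z) \<le> 50 + 1000 * log 2 (real n))} = S - B"
    unfolding S_def B_def D_def by auto
  have BW: "B \<subseteq> (\<Union>p<n. W p)"
  proof
    fix x assume "x \<in> B"
    then obtain z where xn: "length x = n" and zin: "z \<in> set (marker_segments x)" and zl: "real (length z) > D"
      unfolding B_def S_def by force
    have zl': "length z > 4 * m" using zl D unfolding m_def by simp
    from seg[OF zin] obtain p where p: "take (length z) (drop p x) = z" "p + length z \<le> length x"
      and nm: "\<forall>i. i + 4 < length z \<longrightarrow> take 4 (drop i z) \<noteq> marker" by blast
    have tk: "take (4 * m) (drop p x) = take (4 * m) z" using p(1) zl'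
      by (metis min.strict_order_iff take_take)
    have "take (4 * m) z \<in> G m"
      unfolding G_def
    proof (intro CollectI conjI allI impI)
      show "length (take (4 * m) z) = 4 * m" using zl' by simp
    next
      fix j assume j: "j < m"
      have "take 4 (drop (4 * j) (take (4 * m) z)) = take 4 (drop (4 * j) z)"
        using j by (simp add: take_drop min_def)
      then show "take 4 (drop (4 * j) (take (4 * m) z)) \<noteq> marker" using nm j zl' by simp
    qed
    then have "x \<in> W p" unfolding W_def using tk xn p zl' by simp
    moreover have "p < n" using p xn zl' by simp
    ultimately show "x \<in> (\<Union>p<n. W p)" by blast
  qed
  have cW: "real (card (W p)) \<le> 2 ^ n * (15/16) ^ m" for p
  proof (cases "p + 4 * m \<le> n")
    case True
    then have "W p = {x :: bool list. length x = n \<and> take (4 * m) (drop p x) \<in> G m}"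
      unfolding W_def by auto
    then have "card (W p) = 2 ^ (n - 4 * m) * 15 ^ m" using card_W[OF True] by simp
    then have "real (card (W p)) = 2 ^ (n - 4 * m) * 15 ^ m" by simp
    also have "\<dots> = 2 ^ (n - 4 * m) * 2 ^ (4 * m) * (15/16) ^ m"
    proof -
      have "(2::real) ^ (4 * m) = 16 ^ m" by (simp add: power_mult)
      moreover have "(15/16::real) ^ m = 15 ^ m / 16 ^ m" by (rule power_divide)
      ultimately show ?thesis by simp
    qed
    also have "\<dots> = 2 ^ n * (15/16) ^ m"
      using True by (simp add: power_add[symmetric])
    finally show ?thesis by simp
  next
    case False
    then have "W p = {}" unfolding W_def by auto
    then show ?thesis by simp
  qed
  have "card B \<le> card (\<Union>p<n. W p)"
    by (rule card_mono[OF _ BW]) (auto simp: W_def fin_len)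
  also have "\<dots> \<le> (\<Sum>p<n. card (W p))" by (rule card_UN_le) simp
  finally have "real (card B) \<le> (\<Sum>p<n. real (card (W p)))" by (simp flip: of_nat_sum)
  also have "\<dots> \<le> (\<Sum>p<n. 2 ^ n * (15/16) ^ m)" by (rule sum_mono) (rule cW)
  also have "\<dots> = 2 ^ n * (real n * (15/16) ^ m)" by simp
  also have "\<dots> \<le> 2 ^ n * (1/2)"
    using numeric[of k] unfolding m_def assms by (intro mult_left_mono) auto
  finally have cB: "real (card B) \<le> 2 ^ n / 2" by simp
  have cS: "card S = 2 ^ n" unfolding S_def by (rule card_len)
  have "real (card (S - B)) = real (card S) - real (card B)"
    using card_Diff_subset[OF finite_subset[OF BS finS] BS] card_mono[OF finS BS] by simp
  then show ?thesis unfolding good using cB cS S_def by simp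
qed

end
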